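(* Let $n\ge 1$ be an integer and let $\alpha_0,\ldots,\alpha_{2n+1},\eta\in\mathbb{C}$ with $\sum_{i=0}^{2n+1}\alpha_i=1$. Consider the Hamiltonian system \[ \frac{dx_i}{dt}=\frac{\partial H}{\partial y_i},\qquad \frac{dy_i}{dt}=-\frac{\partial H}{\partial x_i},\qquad i=0,\ldots,n, \] with Hamiltonian \[ H=\frac1t\sum_{i=0}^{n}\Big\{\tfrac12 x_i^2y_i^2-\alpha_{2i+2}^{2n-2i-1}x_iy_i+\sum_{j=0}^{i-1}x_i(x_iy_i+\alpha_{2i+1})y_j\Big\}+\frac{1}{1-t}\sum_{i=0}^{n}\sum_{j=0}^{n}x_i(x_iy_i+\alpha_{2i+1})y_j , \] where the dependent variables satisfy $\sum_{i=0}^n x_iy_i+\eta=0$. Then this system admits the specialization $y_i=0$ $(i=0,\ldots,n)$, $\eta=0$ (i.e. with $\eta=0$, setting $y_0=\cdots=y_n\equiv0$ is compatible with the system), and under this specialization the vector $\mathbf{x}={}^t(x_0,\ldots,x_n)$ satisfies the linear system on $\mathbb{P}^1(\mathbb{C})$ \[ \frac{d\mathbf{x}}{dt}=\Big(\frac{A_0}{t}+\frac{A_1}{1-t}\Big)\mathbf{x}, \] with \[ A_0=\sum_{i=0}^{n-1}\big(-\alpha_{2i+2}^{2n-2i-1}\big)E_{i,i}+\sum_{i=0}^{n-1}\sum_{j=i+1}^{n}\alpha_{2j+1}E_{i,j},\qquad A_1=\sum_{i=0}^{n}\sum_{j=0}^{n}\alpha_{2j+1}E_{i,j}. \] Furthermore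 this linear system is of Fuchsian type with regular singular points at $t=0,1,\infty$, and the eigenvalues of its residue matrices are: $-\alpha_2^{2n-1},-\alpha_4^{2n-3},\ldots,-\alpha_{2n}^{1},0$ at $t=0$; $0,\ldots,0$ ($n$ times), $-\sum_{i=0}^n\alpha_{2i+1}$ at $t=1$; $\alpha_1^{2n},\alpha_3^{2n-2},\ldots,\alpha_{2n-1}^{2},\alpha_{2n+1}$ at $t=\infty$.
   Context: Indices of the parameters $\alpha_i$ are taken modulo $2n+2$. For integers $k,l$, $\alpha_k^l=0$ if $l<0$ and $\alpha_k^l=\sum_{i=k}^{k+l}\alpha_i$ if $l\ge0$. $E_{i,j}=(\delta_{i,k}\delta_{j,l})_{k,l=0}^{n}$ denotes the $(n+1)\times(n+1)$ matrix unit (rows and columns indexed $0,\ldots,n$). *)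

theory Defs
  imports "HOL-Analysis.Derivative" "Jordan_Normal_Form.Char_Poly"
begin

definition alp :: "nat \<Rightarrow> (nat \<Rightarrow> complex) \<Rightarrow> nat \<Rightarrow> complex" where
  "alp n \<alpha> k = \<alpha> (k mod (2*n+2))"

text \<open>alpha_k^l: zero for l < 0, otherwise sum of alpha_i for i = k..k+l.\<close>
definition asum :: "nat \<Rightarrow> (nat \<Rightarrow> complex) \<Rightarrow> nat \<Rightarrow> int \<Rightarrow> complex" where
  "asum n \<alpha> k l = (if l < 0 then 0 else (\<Sum>i=k..k + nat l. alp n \<alpha> i))"

definition ham :: "nat \<Rightarrow> (nat \<Rightarrow> complex) \<Rightarrow> complex \<Rightarrow> (nat \<Rightarrow> complex) \<Rightarrow> (nat \<Rightarrow> complex) \<Rightarrow> complex" where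
  "ham n \<alpha> t x y =
     (1/t) * (\<Sum>i\<le>n. (1/2) * (x i)^2 * (y i)^2
                    - asum n \<alpha> (2*i+2) (2*int n - 2*int i - 1) * x i * y i
                    + (\<Sum>j<i. x i * (x i * y i + alp n \<alpha> (2*i+1)) * y j))
   + (1/(1-t)) * (\<Sum>i\<le>n. \<Sum>j\<le>n. x i * (x i * y i + alp n \<alpha> (2*i+1)) * y j)"

definition dH_dx :: "nat \<Rightarrow> (nat \<Rightarrow> complex) \<Rightarrow> complex \<Rightarrow> (nat \<Rightarrow> complex) \<Rightarrow> (nat \<Rightarrow> complex) \<Rightarrow> nat \<Rightarrow> complex" where
  "dH_dx n \<alpha> t x y i = deriv (\<lambda>z. ham n \<alpha> t (x(i := z)) y) (x i)"

definition dH_dy :: "nat \<Rightarrow> (nat \<Rightarrow> complex) \<Rightarrow> complex \<Rightarrow> (nat \<Rightarrow> complex) \<Rightarrow> (nat \<Rightarrow> complex) \<Rightarrow> nat \<Rightarrow> complex" where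
  "dH_dy n \<alpha> t x y i = deriv (\<lambda>z. ham n \<alpha> t x (y(i := z))) (y i)"

definition ham_solution ::
  "nat \<Rightarrow> (nat \<Rightarrow> complex) \<Rightarrow> complex \<Rightarrow> complex set \<Rightarrow> (complex \<Rightarrow> nat \<Rightarrow> complex) \<Rightarrow> (complex \<Rightarrow> nat \<Rightarrow> complex) \<Rightarrow> bool" where
  "ham_solution n \<alpha> \<eta> U x y \<longleftrightarrow>
     (\<forall>t\<in>U. (\<forall>i\<le>n.
        ((\<lambda>s. x s i) has_field_derivative dH_dy n \<alpha> t (x t) (y t) i) (at t) \<and>
        ((\<lambda>s. y s i) has_field_derivative - dH_dx n \<alpha> t (x t) (y t) i) (at t))
      \<and> (\<Sum>i\<le>n. x t i * y t i) + \<eta> = 0)"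

definition A0 :: "nat \<Rightarrow> (nat \<Rightarrow> complex) \<Rightarrow> complex mat" where
  "A0 n \<alpha> = mat (n+1) (n+1) (\<lambda>(i,j).
      (if i = j \<and> i < n then - asum n \<alpha> (2*i+2) (2*int n - 2*int i - 1) else 0)
    + (if i < n \<and> i < j \<and> j \<le> n then alp n \<alpha> (2*j+1) else 0))"

definition A1 :: "nat \<Rightarrow> (nat \<Rightarrow> complex) \<Rightarrow> complex mat" where
  "A1 n \<alpha> = mat (n+1) (n+1) (\<lambda>(i,j). alp n \<alpha> (2*j+1))"

definition coeff :: "nat \<Rightarrow> (nat \<Rightarrow> complex) \<Rightarrow> complex \<Rightarrow> complex mat" where
  "coeff n \<alpha> t = (1/t) \<cdot>\<^sub>m A0 n \<alpha> + (1/(1-t)) \<cdot>\<^sub>m A1 n \<alpha>"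

definition lin_solution ::
  "nat \<Rightarrow> (complex \<Rightarrow> complex mat) \<Rightarrow> complex set \<Rightarrow> (complex \<Rightarrow> nat \<Rightarrow> complex) \<Rightarrow> bool" where
  "lin_solution N C U x \<longleftrightarrow>
     (\<forall>t\<in>U. \<forall>i<N. ((\<lambda>s. x s i) has_field_derivative (\<Sum>j<N. C t $$ (i,j) * x t j)) (at t))"

text \<open>Fuchsian type: the N x N coefficient matrix is a sum of simple-pole terms
  R_p/(t-p) over a finite set P of finite singular points (so all singular points,
  including infinity, are regular singular points).\<close>
definition fuchsian :: "nat \<Rightarrow> (complex \<Rightarrow> complex mat) \<Rightarrow> complex set \<Rightarrow> bool" where
  "fuchsian N C P \<longleftrightarrow> finite P \<and>
     (\<exists>R. (\<forall>p\<in>P. R p \<in> carrier_mat N N) \<and>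
          (\<forall>t. t \<notin> P \<longrightarrow> C t \<in> carrier_mat N N \<and>
               (\<forall>i<N. \<forall>j<N. C t $$ (i,j) = (\<Sum>p\<in>P. R p $$ (i,j) / (t - p)))))"

definition residue_at :: "nat \<Rightarrow> (complex \<Rightarrow> complex mat) \<Rightarrow> complex \<Rightarrow> complex mat \<Rightarrow> bool" where
  "residue_at N C p R \<longleftrightarrow> R \<in> carrier_mat N N \<and>
     (\<forall>i<N. \<forall>j<N. ((\<lambda>t. (t - p) * C t $$ (i,j)) \<longlongrightarrow> R $$ (i,j)) (at p))"

text \<open>Residue matrix at infinity: in s = 1/t, dx/ds = -(1/s^2) C(1/s) x, so the
  residue is the limit of -t C(t) as t \<rightarrow> infinity.\<close>
definition residue_at_inf :: "nat \<Rightarrow> (complex \<Rightarrow> complex mat) \<Rightarrow> complex mat \<Rightarrow> bool" where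
  "residue_at_inf N C R \<longleftrightarrow> R \<in> carrier_mat N N \<and>
     (\<forall>i<N. \<forall>j<N. ((\<lambda>t. - t * C t $$ (i,j)) \<longlongrightarrow> R $$ (i,j)) at_infinity)"

end

theory Submission
  imports Defs
begin


lemma dH_dx_zero: "dH_dx n \<alpha> t x (\<lambda>_. 0) i = 0"
proof -
  have "(\<lambda>z. ham n \<alpha> t (x(i := z)) (\<lambda>_. 0)) = (\<lambda>z. 0)" by (simp add: ham_def)
  then show ?thesis unfolding dH_dx_def by simp
qed

lemma ham_y: "ham n \<alpha> t x ((\<lambda>_. 0)(i := z)) =
  (1/t) * (\<Sum>k\<le>n. (1/2) * (x k)^2 * (z * (if k = i then 1 else 0))^2
                    - asum n \<alpha> (2*k+2) (2*int n - 2*int k - 1) * x k * (z * (if k = i then 1 else 0))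
                    + (\<Sum>j<k. x k * (x k * (z * (if k = i then 1 else 0)) + alp n \<alpha> (2*k+1)) * (z * (if j = i then 1 else 0))))
   + (1/(1-t)) * (\<Sum>k\<le>n. \<Sum>j\<le>n. x k * (x k * (z * (if k = i then 1 else 0)) + alp n \<alpha> (2*k+1)) * (z * (if j = i then 1 else 0)))"
proof -
  have hz: "\<And>j. (if j = i then z else 0) = z * (if j = i then 1 else (0::complex))" by simp
  show ?thesis unfolding ham_def fun_upd_def hz ..
qed

lemma delta_sum: "finite A \<Longrightarrow> (\<Sum>j\<in>A. (if j = i then 1 else 0) * (c::complex)) = (if i \<in> A then c else 0)"
  by (simp add: if_distrib[of "\<lambda>u. u * c"] cong: if_cong)

lemma delta_sum2: "finite A \<Longrightarrow> (\<Sum>j\<in>A. (if j = i then 1 else 0) * (c j::complex)) = (if i \<in> A then c i else 0)"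
  by (simp add: if_distrib[of "\<lambda>u. u * _"] cong: if_cong)

lemma gt_sum: "(\<Sum>k\<le>(n::nat). (if i < k then (f k::complex) else 0)) = (\<Sum>k\<in>{i<..n}. f k)"
proof -
  have "{i<..n} = {k\<in>{..n}. i < k}" by auto
  moreover have "(\<Sum>k\<in>{..n}. if i<k then f k else 0) = sum f {k\<in>{..n}. i<k}"
    by (rule sum.inter_filter[symmetric]) simp
  ultimately show ?thesis by simp
qed

lemma dH_dy_deriv: assumes "i \<le> n" shows
  "((\<lambda>z. ham n \<alpha> t x ((\<lambda>_. 0)(i := z))) has_field_derivative
     (1/t) * (- asum n \<alpha> (2*i+2) (2*int n - 2*int i - 1) * x i + (\<Sum>k\<in>{i<..n}. x k * alp n \<alpha> (2*k+1)))
     + (1/(1-t)) * (\<Sum>k\<le>n. x k * alp n \<alpha> (2*k+1))) (at 0)"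
  unfolding ham_y
  apply (rule derivative_eq_intros refl)+
  using assms apply (simp add: delta_sum delta_sum2 gt_sum sum_subtractf)
  done
lemma asum_last: "asum n \<alpha> (2*n+2) (2*int n - 2*int n - 1) = 0"
  by (simp add: asum_def)

lemma coeff_row: assumes "i \<le> n" shows
  "(\<Sum>j<n+1. coeff n \<alpha> t $$ (i,j) * x j) =
     (1/t) * (- asum n \<alpha> (2*i+2) (2*int n - 2*int i - 1) * x i + (\<Sum>k\<in>{i<..n}. x k * alp n \<alpha> (2*k+1)))
     + (1/(1-t)) * (\<Sum>k\<le>n. x k * alp n \<alpha> (2*k+1))"
proof -
  have "(\<Sum>j<n+1. coeff n \<alpha> t $$ (i,j) * x j) =
     (\<Sum>j\<le>n. (1/t) * (((if i = j \<and> i < n then - asum n \<alpha> (2*i+2) (2*int n - 2*int i - 1) else 0)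
    + (if i < n \<and> i < j \<and> j \<le> n then alp n \<alpha> (2*j+1) else 0)) * x j) + (1/(1-t)) * (x j * alp n \<alpha> (2*j+1)))"
    using assms by (intro sum.cong) (auto simp: coeff_def A0_def A1_def algebra_simps)
  also have "\<dots> = (1/t) * (\<Sum>j\<le>n. ((if i = j \<and> i < n then - asum n \<alpha> (2*i+2) (2*int n - 2*int i - 1) else 0)
    + (if i < n \<and> i < j \<and> j \<le> n then alp n \<alpha> (2*j+1) else 0)) * x j) + (1/(1-t)) * (\<Sum>j\<le>n. x j * alp n \<alpha> (2*j+1))"
    by (simp add: sum.distrib sum_distrib_left)
  also have "(\<Sum>j\<le>n. ((if i = j \<and> i < n then - asum n \<alpha> (2*i+2) (2*int n - 2*int i - 1) else 0)
    + (if i < n \<and> i < j \<and> j \<le> n then alp n \<alpha> (2*j+1) else 0)) * x j)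
    = (\<Sum>j\<le>n. (if j = i then - asum n \<alpha> (2*i+2) (2*int n - 2*int i - 1) * x i else 0)
      + (if i < j then x j * alp n \<alpha> (2*j+1) else 0))"
  proof (intro sum.cong refl)
    fix j assume j: "j \<in> {..n}"
    show "((if i = j \<and> i < n then - asum n \<alpha> (2*i+2) (2*int n - 2*int i - 1) else 0)
    + (if i < n \<and> i < j \<and> j \<le> n then alp n \<alpha> (2*j+1) else 0)) * x j =
     (if j = i then - asum n \<alpha> (2*i+2) (2*int n - 2*int i - 1) * x i else 0)
      + (if i < j then x j * alp n \<alpha> (2*j+1) else 0)"
      using j assms asum_last[of n \<alpha>] by (cases "i = n") (auto simp: algebra_simps)
  qed
  also have "\<dots> = - asum n \<alpha> (2*i+2) (2*int n - 2*int i - 1) * x i + (\<Sum>k\<in>{i<..n}. x k * alp n \<alpha> (2*k+1))"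
    using assms by (simp add: sum.distrib gt_sum)
  finally show ?thesis .
qed

lemma part1: "ham_solution n \<alpha> 0 U x (\<lambda>t i. 0) \<longleftrightarrow> lin_solution (n+1) (coeff n \<alpha>) U x"
proof -
  have d: "dH_dy n \<alpha> t (x t) (\<lambda>_. 0) i = (\<Sum>j<n+1. coeff n \<alpha> t $$ (i,j) * x t j)" if "i \<le> n" for t i
    unfolding dH_dy_def coeff_row[OF that] using DERIV_imp_deriv[OF dH_dy_deriv[OF that]] by simp
  show ?thesis unfolding ham_solution_def lin_solution_def
    by (auto simp: dH_dx_zero d less_Suc_eq_le)
qed


lemma A0_carrier[simp]: "A0 n \<alpha> \<in> carrier_mat (Suc n) (Suc n)" by (simp add: A0_def)
lemma A1_carrier[simp]: "A1 n \<alpha> \<in> carrier_mat (Suc n) (Suc n)" by (simp add: A1_def)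
lemma coeff_carrier[simp]: "coeff n \<alpha> t \<in> carrier_mat (Suc n) (Suc n)"
  unfolding coeff_def by (intro add_carrier_mat smult_carrier_mat) (simp_all add: A0_def A1_def)
lemma A1_dims[simp]: "dim_row (A1 n \<alpha>) = n+1" "dim_col (A1 n \<alpha>) = n+1" by (simp_all add: A1_def)
lemma A0_dims[simp]: "dim_row (A0 n \<alpha>) = n+1" "dim_col (A0 n \<alpha>) = n+1" by (simp_all add: A0_def)

lemma coeff_entry: "i < n+1 \<Longrightarrow> j < n+1 \<Longrightarrow>
  coeff n \<alpha> t $$ (i,j) = (1/t) * A0 n \<alpha> $$ (i,j) + (1/(1-t)) * A1 n \<alpha> $$ (i,j)"
  unfolding coeff_def by (simp add: A0_def A1_def)

lemma fuch: "fuchsian (n+1) (coeff n \<alpha>) {0, 1}"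
  unfolding fuchsian_def
proof (intro conjI exI[of _ "\<lambda>p. if p = 0 then A0 n \<alpha> else - A1 n \<alpha>"] ballI allI impI)
  fix t :: complex and i j assume t: "t \<notin> {0,1}" and ij: "i < n+1" "j < n+1"
  have "1 - t \<noteq> 0" "t \<noteq> 0" using t by auto
  then show "coeff n \<alpha> t $$ (i, j) =
       (\<Sum>p\<in>{0, 1}. (if p = 0 then A0 n \<alpha> else - A1 n \<alpha>) $$ (i, j) / (t - p))"
    using ij by (simp add: coeff_entry field_simps)
qed simp_all

lemma res0: "residue_at (n+1) (coeff n \<alpha>) 0 (A0 n \<alpha>)"
  unfolding residue_at_def
proof (intro conjI allI impI)
  fix i j assume ij: "i < n+1" "j < n+1"
  let ?a = "A0 n \<alpha> $$ (i,j)" and ?b = "A1 n \<alpha> $$ (i,j)"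
  have "((\<lambda>t. ?a + t * (1/(1-t)) * ?b) \<longlongrightarrow> ?a + 0 * (1/(1-0)) * ?b) (at 0)"
    by (intro tendsto_intros) auto
  moreover have "eventually (\<lambda>t. ?a + t * (1/(1-t)) * ?b = (t - 0) * coeff n \<alpha> t $$ (i,j)) (at (0::complex))"
    unfolding eventually_at_filter
  proof (rule always_eventually, intro allI impI)
    fix t :: complex assume "t \<noteq> 0"
    then show "?a + t * (1/(1-t)) * ?b = (t - 0) * coeff n \<alpha> t $$ (i,j)"
      using ij by (simp add: coeff_entry distrib_left)
  qed
  ultimately show "((\<lambda>t. (t - 0) * coeff n \<alpha> t $$ (i, j)) \<longlongrightarrow> ?a) (at 0)"
    by (auto intro: Lim_transform_eventually)
qed simp


lemma res1: "residue_at (n+1) (coeff n \<alpha>) 1 (- A1 n \<alpha>)"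
  unfolding residue_at_def
proof (intro conjI allI impI)
  fix i j assume ij: "i < n+1" "j < n+1"
  let ?a = "A0 n \<alpha> $$ (i,j)" and ?b = "A1 n \<alpha> $$ (i,j)"
  have "((\<lambda>t. (t - 1) / t * ?a - ?b) \<longlongrightarrow> (1 - 1) / 1 * ?a - ?b) (at 1)"
    by (intro tendsto_intros) auto
  moreover have "eventually (\<lambda>t. (t - 1) / t * ?a - ?b = (t - 1) * coeff n \<alpha> t $$ (i,j)) (at (1::complex))"
    unfolding eventually_at_filter
  proof (rule always_eventually, intro allI impI)
    fix t :: complex assume "t \<noteq> 1"
    then have "1 - t \<noteq> 0" by auto
    then have h: "(t - 1) * (1/(1-t)) = -1" by (simp add: divide_simps)
    have "(t - 1) * coeff n \<alpha> t $$ (i,j) = (t - 1) / t * ?a + ((t - 1) * (1/(1-t))) * ?b"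
      using ij by (simp add: coeff_entry ring_distribs)
    then show "(t - 1) / t * ?a - ?b = (t - 1) * coeff n \<alpha> t $$ (i,j)"
      unfolding h by simp
  qed
  ultimately show "((\<lambda>t. (t - 1) * coeff n \<alpha> t $$ (i, j)) \<longlongrightarrow> (- A1 n \<alpha>) $$ (i,j)) (at 1)"
    using ij by (auto intro: Lim_transform_eventually)
qed simp

lemma inv_lim: "((\<lambda>t::complex. 1 / (1 - t)) \<longlongrightarrow> 0) at_infinity"
proof -
  have "filterlim (\<lambda>t::complex. t + (-1)) at_infinity at_infinity"
    by (rule tendsto_add_filterlim_at_infinity'[OF filterlim_ident tendsto_const])
  then have "((\<lambda>t::complex. (-1) / (t + (-1))) \<longlongrightarrow> 0) at_infinity"
    by (rule tendsto_divide_0[OF tendsto_const])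
  moreover have "(\<lambda>t::complex. (-1) / (t + (-1))) = (\<lambda>t. 1 / (1 - t))"
  proof
    fix t :: complex
    have "t + (-1) = - (1 - t)" by simp
    then show "(-1) / (t + (-1)) = 1 / (1 - t)" using minus_divide_divide[of 1 "1 - t"] by simp
  qed
  ultimately show ?thesis by simp
qed

lemma resinf: "residue_at_inf (n+1) (coeff n \<alpha>) (A1 n \<alpha> - A0 n \<alpha>)"
  unfolding residue_at_inf_def
proof (intro conjI allI impI)
  fix i j assume ij: "i < n+1" "j < n+1"
  let ?a = "A0 n \<alpha> $$ (i,j)" and ?b = "A1 n \<alpha> $$ (i,j)"
  have "((\<lambda>t. - ?a + (1 - 1 / (1 - t)) * ?b) \<longlongrightarrow> - ?a + (1 - 0) * ?b) at_infinity"
    by (intro tendsto_intros inv_lim)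
  moreover have "eventually (\<lambda>t. - ?a + (1 - 1 / (1 - t)) * ?b = - t * coeff n \<alpha> t $$ (i,j)) at_infinity"
    unfolding eventually_at_infinity
  proof (intro exI[of _ 2] allI impI)
    fix t :: complex assume "2 \<le> norm t"
    then have "1 - t \<noteq> 0" "t \<noteq> 0" by auto
    then have h: "- t * (1/(1-t)) = 1 - 1/(1-t)" "- t * (1/t) = -1" by (simp_all add: divide_simps)
    have "- t * coeff n \<alpha> t $$ (i,j) = (- t * (1/t)) * ?a + (- t * (1/(1-t))) * ?b"
      using ij by (simp only: coeff_entry ring_distribs mult.assoc)
    then show "- ?a + (1 - 1 / (1 - t)) * ?b = - t * coeff n \<alpha> t $$ (i,j)"
      unfolding h by simp
  qed
  ultimately show "((\<lambda>t. - t * coeff n \<alpha> t $$ (i, j)) \<longlongrightarrow> (A1 n \<alpha> - A0 n \<alpha>) $$ (i,j)) at_infinity"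
    using ij by (auto intro: Lim_transform_eventually)
qed (rule minus_carrier_mat, simp)



lemma cp_ut: assumes "A \<in> carrier_mat (Suc n) (Suc n)" "upper_triangular A"
  shows "char_poly A = (\<Prod>i\<le>n. [:- A$$(i,i), 1:])"
proof -
  have "char_poly A = prod_list (map (\<lambda>i. [:- A$$(i,i), 1:]) [0..<Suc n])"
    using char_poly_upper_triangular[OF assms] assms(1) by (simp add: diag_mat_def comp_def del: upt_Suc)
  also have "\<dots> = (\<Prod>i\<in>set [0..<Suc n]. [:- A$$(i,i), 1:])"
    by (rule prod.distinct_set_conv_list[symmetric]) simp
  also have "set [0..<Suc n] = {..n}" by auto
  finally show ?thesis .
qed

lemma cp0: "char_poly (A0 n \<alpha>) = (\<Prod>i\<le>n. [: asum n \<alpha> (2*i+2) (2*int n - 2*int i - 1), 1 :])"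
proof -
  have "upper_triangular (A0 n \<alpha>)" unfolding upper_triangular_def by (simp add: A0_def)
  then have "char_poly (A0 n \<alpha>) = (\<Prod>i\<le>n. [:- A0 n \<alpha>$$(i,i), 1:])" by (intro cp_ut) simp
  also have "\<dots> = (\<Prod>i\<le>n. [: asum n \<alpha> (2*i+2) (2*int n - 2*int i - 1), 1 :])"
  proof (intro prod.cong refl)
    fix i assume "i \<in> {..n}"
    then show "[:- A0 n \<alpha>$$(i,i), 1:] = [: asum n \<alpha> (2*i+2) (2*int n - 2*int i - 1), 1 :]"
      by (cases "i = n") (auto simp: A0_def asum_def)
  qed
  finally show ?thesis .
qed

lemma asum_split: assumes "i < n"
  shows "asum n \<alpha> (2*i+1) (2*int n - 2*int i) = alp n \<alpha> (2*i+1) + asum n \<alpha> (2*i+2) (2*int n - 2*int i - 1)"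
proof -
  have e1: "2*i+1 + nat (2*int n - 2*int i) = 2*n+1" using assms by simp
  have e2: "2*i+2 + nat (2*int n - 2*int i - 1) = 2*n+1" using assms by simp
  have "(\<Sum>k=2*i+1..2*n+1. alp n \<alpha> k) = alp n \<alpha> (2*i+1) + (\<Sum>k=Suc (2*i+1)..2*n+1. alp n \<alpha> k)"
    by (rule sum.atLeast_Suc_atMost) (use assms in simp)
  then show ?thesis unfolding asum_def e1 e2 using assms by simp
qed

lemma cpinf: "char_poly (A1 n \<alpha> - A0 n \<alpha>) = (\<Prod>i\<le>n. [: - asum n \<alpha> (2*i+1) (2*int n - 2*int i), 1 :])"
proof -
  let ?R = "A1 n \<alpha> - A0 n \<alpha>"
  have R: "?R \<in> carrier_mat (Suc n) (Suc n)" by (rule minus_carrier_mat) simp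
  have ent: "?R $$ (i,j) = A1 n \<alpha> $$ (i,j) - A0 n \<alpha> $$ (i,j)" if "i < Suc n" "j < Suc n" for i j
    using that by simp
  have "upper_triangular (transpose_mat ?R)" unfolding upper_triangular_def
    using ent by (auto simp: A0_def A1_def)
  then have "char_poly (transpose_mat ?R) = (\<Prod>i\<le>n. [:- transpose_mat ?R$$(i,i), 1:])"
    using R by (intro cp_ut) auto
  also have "\<dots> = (\<Prod>i\<le>n. [: - asum n \<alpha> (2*i+1) (2*int n - 2*int i), 1 :])"
  proof (intro prod.cong refl)
    fix i assume i: "i \<in> {..n}"
    have "transpose_mat ?R$$(i,i) = asum n \<alpha> (2*i+1) (2*int n - 2*int i)"
    proof (cases "i = n")
      case True then show ?thesis using i ent[of i i] by (auto simp: A0_def A1_def asum_def)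
    next
      case False then show ?thesis using i ent[of i i] asum_split[of i n \<alpha>] by (auto simp: A0_def A1_def)
    qed
    then show "[:- transpose_mat ?R$$(i,i), 1:] = [: - asum n \<alpha> (2*i+1) (2*int n - 2*int i), 1 :]"
      by simp
  qed
  finally show ?thesis using char_poly_transpose_mat[OF R] by simp
qed



lemma dsum: "finite A \<Longrightarrow> (\<Sum>k\<in>A. (if k = i then 1 else 0) * (f k::complex)) = (if i \<in> A then f i else 0)"
  by (simp add: if_distrib[of "\<lambda>u. u * _"] cong: if_cong)

lemma dsum_r: "finite A \<Longrightarrow> (\<Sum>k\<in>A. (f k::complex) * (if k = i then 1 else 0)) = (if i \<in> A then f i else 0)"
  by (simp add: if_distrib[of "\<lambda>u. _ * u"] cong: if_cong)

lemma dsum_pred: "(\<Sum>k<(N::nat). (if i = k+1 then 1 else 0) * (f k::complex)) = (if 0 < i \<and> i \<le> N then f (i-1) else 0)"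
proof (cases "i::nat")
  case 0 then show ?thesis by simp
next
  case (Suc m)
  have "(\<Sum>k<N. (if i = k+1 then 1 else 0) * f k) = (\<Sum>k<N. (if k = m then 1 else 0) * f k)"
    using Suc by (intro sum.cong) auto
  then show ?thesis using Suc by (simp add: dsum)
qed

definition Lm :: "nat \<Rightarrow> complex mat" where
  "Lm N = mat N N (\<lambda>(i,j). (if j = i then 1 else 0) - (if i = j+1 then 1 else 0))"
definition Li :: "nat \<Rightarrow> complex mat" where
  "Li N = mat N N (\<lambda>(i,j). if j \<le> i then 1 else 0)"
definition Tm :: "nat \<Rightarrow> (nat \<Rightarrow> complex) \<Rightarrow> complex mat" where
  "Tm N a = mat N N (\<lambda>(i,j). if i = 0 then - (\<Sum>k\<in>{j..<N}. a k) else 0)"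

lemma mult_entry: "A \<in> carrier_mat N N \<Longrightarrow> B \<in> carrier_mat N N \<Longrightarrow> i < N \<Longrightarrow> j < N \<Longrightarrow>
  (A * B) $$ (i,j) = (\<Sum>k<N. A $$ (i,k) * B $$ (k,j))"
  by (simp add: scalar_prod_def atLeast0LessThan)

lemma Lm_c[simp]: "Lm N \<in> carrier_mat N N" by (simp add: Lm_def)
lemma Li_c[simp]: "Li N \<in> carrier_mat N N" by (simp add: Li_def)
lemma Tm_c[simp]: "Tm N a \<in> carrier_mat N N" by (simp add: Tm_def)

lemma L_Li: "Lm N * Li N = 1\<^sub>m N"
proof (rule eq_matI)
  fix i j assume ij: "i < dim_row (1\<^sub>m N)" "j < dim_col (1\<^sub>m N)"
  then have ij': "i < N" "j < N" by auto
  have "(Lm N * Li N) $$ (i,j) = (\<Sum>k<N. Lm N $$ (i,k) * Li N $$ (k,j))"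
    using ij' by (intro mult_entry) auto
  also have "\<dots> = 1\<^sub>m N $$ (i,j)"
  proof (cases "i = 0")
    case True
    have "(\<Sum>k<N. Lm N $$ (i,k) * Li N $$ (k,j)) = (\<Sum>k<N. if k = 0 then (if j \<le> 0 then 1 else 0) else 0)"
      using ij' True by (intro sum.cong) (auto simp: Lm_def Li_def)
    then show ?thesis using ij' True by simp
  next
    case False
    have "(\<Sum>k<N. Lm N $$ (i,k) * Li N $$ (k,j)) = (\<Sum>k<N. (if k = i then (if j \<le> i then 1 else 0) else 0) - (if k = i - 1 then (if j \<le> i - 1 then 1 else 0) else 0))"
      using ij' False by (intro sum.cong) (auto simp: Lm_def Li_def)
    also have "\<dots> = (if j \<le> i then 1 else 0) - (if j \<le> i - 1 then 1 else 0)"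
      using ij' by (simp add: sum_subtractf)
    finally show ?thesis using ij' False by auto
  qed
  finally show "(Lm N * Li N) $$ (i,j) = 1\<^sub>m N $$ (i,j)" .
qed (auto simp: Lm_def Li_def)

lemma Li_L: "Li N * Lm N = 1\<^sub>m N"
proof (rule eq_matI)
  fix i j assume ij: "i < dim_row (1\<^sub>m N)" "j < dim_col (1\<^sub>m N)"
  then have ij': "i < N" "j < N" by auto
  have "(Li N * Lm N) $$ (i,j) = (\<Sum>k<N. Li N $$ (i,k) * Lm N $$ (k,j))"
    using ij' by (intro mult_entry) auto
  also have "\<dots> = (\<Sum>k<N. (if k = j then (if j \<le> i then 1 else 0) else 0) - (if k = j+1 then (if j+1 \<le> i then 1 else 0) else 0))"
    using ij' by (intro sum.cong) (auto simp: Lm_def Li_def)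
  also have "\<dots> = (if j \<le> i then 1 else 0) - (if j + 1 < N then (if j+1 \<le> i then 1 else 0) else 0)"
    using ij' by (simp add: sum_subtractf)
  also have "\<dots> = 1\<^sub>m N $$ (i,j)" using ij' by auto
  finally show "(Li N * Lm N) $$ (i,j) = 1\<^sub>m N $$ (i,j)" .
qed (auto simp: Lm_def Li_def)

lemma LiM: "Li N * mat N N (\<lambda>(i,j). if i = 0 then - a j else 0) = mat N N (\<lambda>(i,j). - (a j :: complex))"
proof (rule eq_matI)
  fix i j assume ij: "i < dim_row (mat N N (\<lambda>(i,j). - (a j :: complex)))" "j < dim_col (mat N N (\<lambda>(i,j). - (a j :: complex)))"
  then have ij': "i < N" "j < N" by auto
  have "(Li N * mat N N (\<lambda>(i,j). if i = 0 then - a j else 0)) $$ (i,j) = (\<Sum>k<N. Li N $$ (i,k) * mat N N (\<lambda>(i,j). if i = 0 then - a j else 0) $$ (k,j))"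
    using ij' by (intro mult_entry) auto
  also have "\<dots> = (\<Sum>k<N. (if k = 0 then - a j else 0))"
    using ij' by (intro sum.cong) (auto simp: Li_def)
  also have "\<dots> = - a j"
    using ij' by auto
  finally show "(Li N * mat N N (\<lambda>(i,j). if i = 0 then - a j else 0)) $$ (i,j) = mat N N (\<lambda>(i,j). - (a j :: complex)) $$ (i,j)"
    using ij' by simp
qed (auto simp: Li_def)

lemma TL: assumes "0 < N" shows "Tm N a * Lm N = mat N N (\<lambda>(i,j). if i = 0 then - a j else 0)"
proof (rule eq_matI)
  fix i j assume ij: "i < dim_row (mat N N (\<lambda>(i,j). if i = 0 then - a j else (0::complex)))" "j < dim_col (mat N N (\<lambda>(i,j). if i = 0 then - a j else (0::complex)))"
  then have ij': "i < N" "j < N" by auto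
  have "(Tm N a * Lm N) $$ (i,j) = (\<Sum>k<N. Tm N a $$ (i,k) * Lm N $$ (k,j))"
    using ij' by (intro mult_entry) auto
  also have "\<dots> = (\<Sum>k<N. (if k = j then Tm N a $$ (i,j) else 0) - (if k = j+1 then Tm N a $$ (i,j+1) else 0))"
    using ij' by (intro sum.cong) (auto simp: Lm_def)
  also have "\<dots> = Tm N a $$ (i,j) - (if j+1 < N then Tm N a $$ (i,j+1) else 0)"
    using ij' by (simp add: sum_subtractf)
  also have "\<dots> = (if i = 0 then - a j else 0)"
  proof (cases "j+1 < N")
    case True
    have "sum a {j..<N} = a j + sum a {Suc j..<N}" using ij' by (simp add: sum.atLeast_Suc_lessThan)
    then show ?thesis using True ij' by (simp add: Tm_def)
  next
    case False
    then have "j + 1 = N" using ij' by simp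
    then have "{j..<N} = {j}" by auto
    then show ?thesis using False ij' by (simp add: Tm_def)
  qed
  finally show "(Tm N a * Lm N) $$ (i,j) = mat N N (\<lambda>(i,j). if i = 0 then - a j else 0) $$ (i,j)"
    using ij' by simp
qed (auto simp: Tm_def Lm_def)

lemma cp1: "char_poly (- A1 n \<alpha>) = [: 0, 1 :] ^ n * [: (\<Sum>i\<le>n. alp n \<alpha> (2*i+1)), 1 :]"
proof -
  define a where "a = (\<lambda>j. alp n \<alpha> (2*j+1))"
  let ?N = "Suc n"
  have eqA: "- A1 n \<alpha> = mat ?N ?N (\<lambda>(i,j). - a j)"
    by (rule eq_matI) (auto simp: A1_def a_def)
  have "Li ?N * Tm ?N a * Lm ?N = Li ?N * (Tm ?N a * Lm ?N)"
    by (rule assoc_mult_mat[OF Li_c Tm_c Lm_c])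
  also have "\<dots> = - A1 n \<alpha>" unfolding TL[OF zero_less_Suc] LiM eqA ..
  finally have sim: "similar_mat (- A1 n \<alpha>) (Tm ?N a)"
    by (intro similar_matI[of _ _ "Li ?N" "Lm ?N" ?N]) (auto simp: Li_L L_Li A1_def)
  have ut: "upper_triangular (Tm ?N a)" unfolding upper_triangular_def by (auto simp: Tm_def)
  have "char_poly (- A1 n \<alpha>) = char_poly (Tm ?N a)" by (rule char_poly_similar[OF sim])
  also have "\<dots> = (\<Prod>i\<le>n. [:- Tm ?N a $$(i,i), 1:])" by (rule cp_ut[OF _ ut]) simp
  also have "{..n} = insert 0 {1..n}" by auto
  also have "(\<Prod>i\<in>insert 0 {1..n}. [:- Tm ?N a $$(i,i), 1:]) = [:- Tm ?N a $$(0,0), 1:] * (\<Prod>i\<in>{1..n}. [:- Tm ?N a $$(i,i), 1:])"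
    by (rule prod.insert) auto
  also have "(\<Prod>i\<in>{1..n}. [:- Tm ?N a $$(i,i), 1:]) = (\<Prod>i\<in>{1..n}. [:0, 1:])"
    by (intro prod.cong refl) (auto simp: Tm_def)
  also have "\<dots> = [:0,1:] ^ n" by simp
  also have "- Tm ?N a $$(0,0) = (\<Sum>i\<le>n. alp n \<alpha> (2*i+1))"
    by (simp add: Tm_def a_def atLeast0LessThan flip: lessThan_Suc_atMost)
  finally show ?thesis by (simp add: mult.commute)
qed


theorem proposition2p3:
  fixes n :: nat and \<alpha> :: "nat \<Rightarrow> complex"
  assumes "n \<ge> 1"
    and "(\<Sum>i\<le>2*n+1. \<alpha> i) = 1"
  shows
    "(\<forall>U x. open U \<longrightarrow> U \<subseteq> - {0, 1} \<longrightarrow>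
        (ham_solution n \<alpha> 0 U x (\<lambda>t i. 0) \<longleftrightarrow> lin_solution (n+1) (coeff n \<alpha>) U x))
   \<and> fuchsian (n+1) (coeff n \<alpha>) {0, 1}
   \<and> (\<exists>R. residue_at (n+1) (coeff n \<alpha>) 0 R \<and>
          char_poly R = (\<Prod>i\<le>n. [: asum n \<alpha> (2*i+2) (2*int n - 2*int i - 1), 1 :]))
   \<and> (\<exists>R. residue_at (n+1) (coeff n \<alpha>) 1 R \<and>
          char_poly R = [: 0, 1 :] ^ n * [: (\<Sum>i\<le>n. alp n \<alpha> (2*i+1)), 1 :])
   \<and> (\<exists>R. residue_at_inf (n+1) (coeff n \<alpha>) R \<and>
          char_poly R = (\<Prod>i\<le>n. [: - asum n \<alpha> (2*i+1) (2*int n - 2*int i), 1 :]))"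
    using part1 fuch res0 cp0 res1 cp1 resinf cpinf by blast

end
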